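(* Assume $M$ is projective in $\sigma[M]$ and $M$ is an Artinian $R$-module. Then either $P(M)=M$, or there exist finitely many primitive $M$-ideals $P_1,\dots,P_n$ of $M$ with $P(M)=\bigcap_{i=1}^n P_i$.
   Context: $R$ is a ring with identity, modules are unital left $R$-modules, $M$ is a fixed left $R$-module; $\sigma[M]$ is the full subcategory of $R$-modules isomorphic to submodules of $M$-generated modules. $\mathrm{Ann}_M(X):=\bigcap_{f\in\mathrm{Hom}_R(M,X)}\ker f$. A submodule $N\le M$ is an $M$-ideal if $N$ is the intersection of the kernels of all homomorphisms from $M$ into modules of some class $\mathcal C$. For $N\le M$ and a module $X$, $N\cdot X$ is the intersection of the kernels of all homomorphisms $X\to W$ where $W$ ranges over modules with $f(N)=0$ for all $f\in\mathrm{Hom}_R(M,W)$ (for $Y\le X$, $N\cdot Y$ is formed regarding $Y$ as a module). A module $X\ne0$ is $M$-prime if for all $N\le M$, $Y\le X$, $N\cdot Y=0$ implies $N\cdot X=0$ or $Y=0$. A proper $M$-ideal $P$ is a prime $M$-ideal if $P=\mathrm{Ann}_M(X)$ for some $M$-prime module $X$. An $M$-ideal $P$ is primitive if $P=\mathrm{Ann}_M(S)$ for some simple module $S$. $P(M)$ is the intersection of all prime $M$-ideals of $M$ ($P(M)=M$ if there are none). *)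

theory Defs
  imports "HOL-Algebra.Module"
begin

text \<open>Unital left modules over a (not necessarily commutative) ring with identity.
  The record type of HOL-Algebra is reused; its multiplicative fields are ignored.\<close>

definition lmodule :: "'r ring \<Rightarrow> ('r, 'a) module \<Rightarrow> bool" where
  "lmodule R M \<longleftrightarrow> ring R \<and> abelian_group M \<and>
     (\<forall>a\<in>carrier R. \<forall>x\<in>carrier M. a \<odot>\<^bsub>M\<^esub> x \<in> carrier M) \<and>
     (\<forall>a\<in>carrier R. \<forall>b\<in>carrier R. \<forall>x\<in>carrier M.
        (a \<oplus>\<^bsub>R\<^esub> b) \<odot>\<^bsub>M\<^esub> x = a \<odot>\<^bsub>M\<^esub> x \<oplus>\<^bsub>M\<^esub> b \<odot>\<^bsub>M\<^esub> x) \<and>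
     (\<forall>a\<in>carrier R. \<forall>x\<in>carrier M. \<forall>y\<in>carrier M.
        a \<odot>\<^bsub>M\<^esub> (x \<oplus>\<^bsub>M\<^esub> y) = a \<odot>\<^bsub>M\<^esub> x \<oplus>\<^bsub>M\<^esub> a \<odot>\<^bsub>M\<^esub> y) \<and>
     (\<forall>a\<in>carrier R. \<forall>b\<in>carrier R. \<forall>x\<in>carrier M.
        (a \<otimes>\<^bsub>R\<^esub> b) \<odot>\<^bsub>M\<^esub> x = a \<odot>\<^bsub>M\<^esub> (b \<odot>\<^bsub>M\<^esub> x)) \<and>
     (\<forall>x\<in>carrier M. \<one>\<^bsub>R\<^esub> \<odot>\<^bsub>M\<^esub> x = x)"

definition submodule :: "'r ring \<Rightarrow> ('r, 'a) module \<Rightarrow> 'a set \<Rightarrow> bool" where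
  "submodule R M N \<longleftrightarrow> N \<subseteq> carrier M \<and> \<zero>\<^bsub>M\<^esub> \<in> N \<and>
     (\<forall>x\<in>N. \<forall>y\<in>N. x \<oplus>\<^bsub>M\<^esub> y \<in> N) \<and>
     (\<forall>a\<in>carrier R. \<forall>x\<in>N. a \<odot>\<^bsub>M\<^esub> x \<in> N)"

definition submod :: "('r, 'a) module \<Rightarrow> 'a set \<Rightarrow> ('r, 'a) module" where
  "submod M N = M\<lparr>carrier := N\<rparr>"

definition mod_hom :: "'r ring \<Rightarrow> ('r, 'a) module \<Rightarrow> ('r, 'b) module \<Rightarrow> ('a \<Rightarrow> 'b) \<Rightarrow> bool" where
  "mod_hom R X W f \<longleftrightarrow> f \<in> carrier X \<rightarrow> carrier W \<and>
     (\<forall>x\<in>carrier X. \<forall>y\<in>carrier X. f (x \<oplus>\<^bsub>X\<^esub> y) = f x \<oplus>\<^bsub>W\<^esub> f y) \<and>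
     (\<forall>a\<in>carrier R. \<forall>x\<in>carrier X. f (a \<odot>\<^bsub>X\<^esub> x) = a \<odot>\<^bsub>W\<^esub> f x)"

definition simple_mod :: "'r ring \<Rightarrow> ('r, 'a) module \<Rightarrow> bool" where
  "simple_mod R S \<longleftrightarrow> lmodule R S \<and> carrier S \<noteq> {\<zero>\<^bsub>S\<^esub>} \<and>
     (\<forall>N. submodule R S N \<longrightarrow> N = {\<zero>\<^bsub>S\<^esub>} \<or> N = carrier S)"

definition artinian :: "'r ring \<Rightarrow> ('r, 'a) module \<Rightarrow> bool" where
  "artinian R M \<longleftrightarrow> (\<forall>C :: nat \<Rightarrow> 'a set. (\<forall>n. submodule R M (C n)) \<longrightarrow>
     (\<forall>n. C (Suc n) \<subseteq> C n) \<longrightarrow> (\<exists>n. \<forall>m\<ge>n. C m = C n))"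

definition Ann :: "'r ring \<Rightarrow> ('r, 'a) module \<Rightarrow> ('r, 'x) module \<Rightarrow> 'a set" where
  "Ann R M X = {m \<in> carrier M. \<forall>f. mod_hom R M X f \<longrightarrow> f m = \<zero>\<^bsub>X\<^esub>}"

definition gen_submod :: "'r ring \<Rightarrow> ('r, 'b) module \<Rightarrow> 'b set \<Rightarrow> 'b set" where
  "gen_submod R W S = \<Inter>{N. submodule R W N \<and> S \<subseteq> N}"

definition M_generated :: "'r ring \<Rightarrow> ('r, 'a) module \<Rightarrow> ('r, 'b) module \<Rightarrow> bool" where
  "M_generated R M W \<longleftrightarrow>
     carrier W = gen_submod R W (\<Union>{f ` carrier M | f. mod_hom R M W f})"

text \<open>X belongs to sigma[M]: X is isomorphic to a submodule of an M-generated module.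
  (Such a module can always be chosen of cardinality at most |X|*|M|*aleph_0,
  hence on the carrier type nat * 'x * 'a.)\<close>
definition in_sigma :: "'r ring \<Rightarrow> ('r, 'a) module \<Rightarrow> ('r, 'x) module \<Rightarrow> bool" where
  "in_sigma R M X \<longleftrightarrow> lmodule R X \<and>
     (\<exists>(W :: ('r, nat \<times> 'x \<times> 'a) module) i. lmodule R W \<and> M_generated R M W \<and>
        mod_hom R X W i \<and> inj_on i (carrier X))"

text \<open>M is projective in sigma[M] (test modules taken on the carrier type 'a set,
  i.e. all modules of sigma[M] of cardinality at most 2^|'a|, up to isomorphism).\<close>
definition proj_in_sigma :: "'r ring \<Rightarrow> ('r, 'a) module \<Rightarrow> bool" where
  "proj_in_sigma R M \<longleftrightarrow> in_sigma R M M \<and>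
     (\<forall>(N :: ('r, 'a set) module) (L :: ('r, 'a set) module) g f.
        in_sigma R M N \<and> in_sigma R M L \<and> mod_hom R N L g \<and> g ` carrier N = carrier L \<and>
        mod_hom R M L f \<longrightarrow>
        (\<exists>h. mod_hom R M N h \<and> (\<forall>x\<in>carrier M. g (h x) = f x)))"

text \<open>N . X : intersection of kernels of all X -> W with f(N)=0 for all f : M -> W.
  It suffices to let W range over modules on the carrier type 'x set
  (every kernel arises from a quotient of X).\<close>
definition prod_M :: "'r ring \<Rightarrow> ('r, 'a) module \<Rightarrow> 'a set \<Rightarrow> ('r, 'x) module \<Rightarrow> 'x set" where
  "prod_M R M N X = {x \<in> carrier X. \<forall>(W :: ('r, 'x set) module) f.
      lmodule R W \<and> (\<forall>g. mod_hom R M W g \<longrightarrow> (\<forall>n\<in>N. g n = \<zero>\<^bsub>W\<^esub>)) \<and> mod_hom R X W f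
      \<longrightarrow> f x = \<zero>\<^bsub>W\<^esub>}"

text \<open>M-ideal: intersection of Ann_M over some class of modules (quotients of M,
  carrier type 'a set, suffice).\<close>
definition M_ideal :: "'r ring \<Rightarrow> ('r, 'a) module \<Rightarrow> 'a set \<Rightarrow> bool" where
  "M_ideal R M N \<longleftrightarrow> (\<exists>\<C> :: ('r, 'a set) module set. (\<forall>W\<in>\<C>. lmodule R W) \<and>
     N = carrier M \<inter> \<Inter>{Ann R M W | W. W \<in> \<C>})"

definition M_prime :: "'r ring \<Rightarrow> ('r, 'a) module \<Rightarrow> ('r, 'x) module \<Rightarrow> bool" where
  "M_prime R M X \<longleftrightarrow> lmodule R X \<and> carrier X \<noteq> {\<zero>\<^bsub>X\<^esub>} \<and>
     (\<forall>N Y. submodule R M N \<longrightarrow> submodule R X Y \<longrightarrow>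
        prod_M R M N (submod X Y) = {\<zero>\<^bsub>X\<^esub>} \<longrightarrow>
        prod_M R M N X = {\<zero>\<^bsub>X\<^esub>} \<or> Y = {\<zero>\<^bsub>X\<^esub>})"

text \<open>Prime M-ideal. The M-prime module may be taken cyclic, i.e. isomorphic to some R/I,
  hence on the carrier type 'r set.\<close>
definition prime_M_ideal :: "'r ring \<Rightarrow> ('r, 'a) module \<Rightarrow> 'a set \<Rightarrow> bool" where
  "prime_M_ideal R M P \<longleftrightarrow> M_ideal R M P \<and> P \<noteq> carrier M \<and>
     (\<exists>X :: ('r, 'r set) module. M_prime R M X \<and> P = Ann R M X)"

text \<open>Primitive M-ideal: annihilator of a simple module (every simple module is
  isomorphic to some R/m, hence carrier type 'r set).\<close>
definition primitive_M_ideal :: "'r ring \<Rightarrow> ('r, 'a) module \<Rightarrow> 'a set \<Rightarrow> bool" where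
  "primitive_M_ideal R M P \<longleftrightarrow> M_ideal R M P \<and>
     (\<exists>S :: ('r, 'r set) module. simple_mod R S \<and> P = Ann R M S)"

definition prime_radical :: "'r ring \<Rightarrow> ('r, 'a) module \<Rightarrow> 'a set" where
  "prime_radical R M = carrier M \<inter> \<Inter>{P. prime_M_ideal R M P}"

end

theory Submission
  imports Defs
begin


lemma ag_idem: "abelian_group G \<Longrightarrow> x \<in> carrier G \<Longrightarrow> x \<oplus>\<^bsub>G\<^esub> x = x \<Longrightarrow> x = \<zero>\<^bsub>G\<^esub>"
proof -
  assume a: "abelian_group G" "x \<in> carrier G" "x \<oplus>\<^bsub>G\<^esub> x = x"
  interpret abelian_group G by fact
  show ?thesis using a by (metis add.l_cancel_one)
qed


lemma ag_zero: "abelian_group G \<Longrightarrow> \<zero>\<^bsub>G\<^esub> \<in> carrier G"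
  by (simp add: abelian_group_def abelian_monoid.zero_closed)
lemma ag_add: "abelian_group G \<Longrightarrow> x \<in> carrier G \<Longrightarrow> y \<in> carrier G \<Longrightarrow> x \<oplus>\<^bsub>G\<^esub> y \<in> carrier G"
  by (simp add: abelian_group_def abelian_monoid.a_closed)
lemma ag_lzero: "abelian_group G \<Longrightarrow> x \<in> carrier G \<Longrightarrow> \<zero>\<^bsub>G\<^esub> \<oplus>\<^bsub>G\<^esub> x = x"
  by (simp add: abelian_group_def abelian_monoid.l_zero)

lemma lmod_ag: "lmodule R M \<Longrightarrow> abelian_group M" by (simp add: lmodule_def)
lemma lmod_ring: "lmodule R M \<Longrightarrow> ring R" by (simp add: lmodule_def)

lemma lmodD:
  assumes "lmodule R M"
  shows "ring R" "abelian_group M"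
    "\<And>a x. a \<in> carrier R \<Longrightarrow> x \<in> carrier M \<Longrightarrow> a \<odot>\<^bsub>M\<^esub> x \<in> carrier M"
    "\<And>a b x. a \<in> carrier R \<Longrightarrow> b \<in> carrier R \<Longrightarrow> x \<in> carrier M \<Longrightarrow>
        (a \<oplus>\<^bsub>R\<^esub> b) \<odot>\<^bsub>M\<^esub> x = a \<odot>\<^bsub>M\<^esub> x \<oplus>\<^bsub>M\<^esub> b \<odot>\<^bsub>M\<^esub> x"
    "\<And>a x y. a \<in> carrier R \<Longrightarrow> x \<in> carrier M \<Longrightarrow> y \<in> carrier M \<Longrightarrow>
        a \<odot>\<^bsub>M\<^esub> (x \<oplus>\<^bsub>M\<^esub> y) = a \<odot>\<^bsub>M\<^esub> x \<oplus>\<^bsub>M\<^esub> a \<odot>\<^bsub>M\<^esub> y"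
    "\<And>a b x. a \<in> carrier R \<Longrightarrow> b \<in> carrier R \<Longrightarrow> x \<in> carrier M \<Longrightarrow>
        (a \<otimes>\<^bsub>R\<^esub> b) \<odot>\<^bsub>M\<^esub> x = a \<odot>\<^bsub>M\<^esub> (b \<odot>\<^bsub>M\<^esub> x)"
    "\<And>x. x \<in> carrier M \<Longrightarrow> \<one>\<^bsub>R\<^esub> \<odot>\<^bsub>M\<^esub> x = x"
  using assms unfolding lmodule_def by auto

lemma homD:
  assumes "mod_hom R X W f"
  shows "\<And>x. x \<in> carrier X \<Longrightarrow> f x \<in> carrier W"
    "\<And>x y. x \<in> carrier X \<Longrightarrow> y \<in> carrier X \<Longrightarrow> f (x \<oplus>\<^bsub>X\<^esub> y) = f x \<oplus>\<^bsub>W\<^esub> f y"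
    "\<And>a x. a \<in> carrier R \<Longrightarrow> x \<in> carrier X \<Longrightarrow> f (a \<odot>\<^bsub>X\<^esub> x) = a \<odot>\<^bsub>W\<^esub> f x"
  using assms unfolding mod_hom_def by auto

lemma smult_zero:
  assumes "lmodule R M" "a \<in> carrier R"
  shows "a \<odot>\<^bsub>M\<^esub> \<zero>\<^bsub>M\<^esub> = \<zero>\<^bsub>M\<^esub>"
proof -
  have ag: "abelian_group M" using lmodD(2)[OF assms(1)] .
  have z: "\<zero>\<^bsub>M\<^esub> \<in> carrier M" using ag_zero[OF ag] .
  have zz: "\<zero>\<^bsub>M\<^esub> \<oplus>\<^bsub>M\<^esub> \<zero>\<^bsub>M\<^esub> = \<zero>\<^bsub>M\<^esub>" using ag_lzero[OF ag z] .
  have "a \<odot>\<^bsub>M\<^esub> (\<zero>\<^bsub>M\<^esub> \<oplus>\<^bsub>M\<^esub> \<zero>\<^bsub>M\<^esub>) = a \<odot>\<^bsub>M\<^esub> \<zero>\<^bsub>M\<^esub> \<oplus>\<^bsub>M\<^esub> a \<odot>\<^bsub>M\<^esub> \<zero>\<^bsub>M\<^esub>"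
    using lmodD(5)[OF assms(1) assms(2) z z] .
  moreover have sc: "a \<odot>\<^bsub>M\<^esub> \<zero>\<^bsub>M\<^esub> \<in> carrier M" using lmodD(3)[OF assms(1) assms(2) z] .
  ultimately show ?thesis using zz ag_idem[OF ag sc] by simp
qed

lemma zero_smult:
  assumes "lmodule R M" "x \<in> carrier M"
  shows "\<zero>\<^bsub>R\<^esub> \<odot>\<^bsub>M\<^esub> x = \<zero>\<^bsub>M\<^esub>"
proof -
  have ag: "abelian_group M" and r: "ring R" using lmodD(1,2) assms by blast+
  have z: "\<zero>\<^bsub>R\<^esub> \<in> carrier R" using ag_zero[OF ring.is_abelian_group[OF r]] .
  have zz: "\<zero>\<^bsub>R\<^esub> \<oplus>\<^bsub>R\<^esub> \<zero>\<^bsub>R\<^esub> = \<zero>\<^bsub>R\<^esub>" using ag_lzero[OF ring.is_abelian_group[OF r] z] .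
  have "(\<zero>\<^bsub>R\<^esub> \<oplus>\<^bsub>R\<^esub> \<zero>\<^bsub>R\<^esub>) \<odot>\<^bsub>M\<^esub> x = \<zero>\<^bsub>R\<^esub> \<odot>\<^bsub>M\<^esub> x \<oplus>\<^bsub>M\<^esub> \<zero>\<^bsub>R\<^esub> \<odot>\<^bsub>M\<^esub> x"
    using lmodD(4)[OF assms(1) z z assms(2)] .
  moreover have sc: "\<zero>\<^bsub>R\<^esub> \<odot>\<^bsub>M\<^esub> x \<in> carrier M" using lmodD(3)[OF assms(1) z assms(2)] .
  ultimately show ?thesis using zz ag_idem[OF ag sc] by simp
qed

lemma hom_zero:
  assumes "lmodule R X" "lmodule R W" "mod_hom R X W f"
  shows "f \<zero>\<^bsub>X\<^esub> = \<zero>\<^bsub>W\<^esub>"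
proof -
  have agX: "abelian_group X" and agW: "abelian_group W" using lmodD(1,2) assms by blast+
  have z: "\<zero>\<^bsub>X\<^esub> \<in> carrier X" using ag_zero[OF agX] .
  have zz: "\<zero>\<^bsub>X\<^esub> \<oplus>\<^bsub>X\<^esub> \<zero>\<^bsub>X\<^esub> = \<zero>\<^bsub>X\<^esub>" using ag_lzero[OF agX z] .
  have "f (\<zero>\<^bsub>X\<^esub> \<oplus>\<^bsub>X\<^esub> \<zero>\<^bsub>X\<^esub>) = f \<zero>\<^bsub>X\<^esub> \<oplus>\<^bsub>W\<^esub> f \<zero>\<^bsub>X\<^esub>" using homD(2)[OF assms(3) z z] .
  moreover have "f \<zero>\<^bsub>X\<^esub> \<in> carrier W" using homD(1)[OF assms(3) z] .
  ultimately show ?thesis using zz ag_idem[OF agW] by simp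
qed

lemma Ann_submodule:
  assumes "lmodule R M" "lmodule R X"
  shows "submodule R M (Ann R M X)"
proof -
  have agM: "abelian_group M" using lmodD(2)[OF assms(1)] .
  show ?thesis unfolding submodule_def Ann_def
  proof (intro conjI ballI)
    show "\<zero>\<^bsub>M\<^esub> \<in> {m \<in> carrier M. \<forall>f. mod_hom R M X f \<longrightarrow> f m = \<zero>\<^bsub>X\<^esub>}"
      using hom_zero[OF assms] ag_zero[OF agM] by simp
  next
    fix x y assume x: "x \<in> {m \<in> carrier M. \<forall>f. mod_hom R M X f \<longrightarrow> f m = \<zero>\<^bsub>X\<^esub>}"
      and y: "y \<in> {m \<in> carrier M. \<forall>f. mod_hom R M X f \<longrightarrow> f m = \<zero>\<^bsub>X\<^esub>}"
    have agX: "abelian_group X" using lmodD(2)[OF assms(2)] .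
    show "x \<oplus>\<^bsub>M\<^esub> y \<in> {m \<in> carrier M. \<forall>f. mod_hom R M X f \<longrightarrow> f m = \<zero>\<^bsub>X\<^esub>}"
    proof (intro CollectI conjI allI impI)
      show "x \<oplus>\<^bsub>M\<^esub> y \<in> carrier M" using x y ag_add[OF agM] by simp
      fix f assume f: "mod_hom R M X f"
      have "f (x \<oplus>\<^bsub>M\<^esub> y) = f x \<oplus>\<^bsub>X\<^esub> f y" using homD(2)[OF f] x y by simp
      also have "\<dots> = \<zero>\<^bsub>X\<^esub>"
      proof -
        have "f x = \<zero>\<^bsub>X\<^esub>" "f y = \<zero>\<^bsub>X\<^esub>" using x y f by simp_all
        then show ?thesis using ag_lzero[OF agX ag_zero[OF agX]] by simp
      qed
      finally show "f (x \<oplus>\<^bsub>M\<^esub> y) = \<zero>\<^bsub>X\<^esub>" .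
    qed
  next
    fix a x assume a: "a \<in> carrier R" and x: "x \<in> {m \<in> carrier M. \<forall>f. mod_hom R M X f \<longrightarrow> f m = \<zero>\<^bsub>X\<^esub>}"
    show "a \<odot>\<^bsub>M\<^esub> x \<in> {m \<in> carrier M. \<forall>f. mod_hom R M X f \<longrightarrow> f m = \<zero>\<^bsub>X\<^esub>}"
    proof (intro CollectI conjI allI impI)
      show "a \<odot>\<^bsub>M\<^esub> x \<in> carrier M" using a x lmodD(3)[OF assms(1)] by simp
      fix f assume f: "mod_hom R M X f"
      have "f (a \<odot>\<^bsub>M\<^esub> x) = a \<odot>\<^bsub>X\<^esub> f x" using homD(3)[OF f] a x by simp
      moreover have "f x = \<zero>\<^bsub>X\<^esub>" using x f by simp
      ultimately show "f (a \<odot>\<^bsub>M\<^esub> x) = \<zero>\<^bsub>X\<^esub>" using smult_zero[OF assms(2) a] by simp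
    qed
  next
    show "{m \<in> carrier M. \<forall>f. mod_hom R M X f \<longrightarrow> f m = \<zero>\<^bsub>X\<^esub>} \<subseteq> carrier M" by blast
  qed
qed

lemma Ann_subset: "Ann R M X \<subseteq> carrier M" by (auto simp: Ann_def)

lemma Inter_submodule:
  assumes "F \<noteq> {}" "\<forall>N\<in>F. submodule R M N"
  shows "submodule R M (\<Inter>F)"
proof -
  have s: "submodule R M N" if "N \<in> F" for N using assms(2) that by blast
  have c: "N \<subseteq> carrier M" if "N \<in> F" for N using s[OF that] unfolding submodule_def by (elim conjE)
  have z: "\<zero>\<^bsub>M\<^esub> \<in> N" if "N \<in> F" for N using s[OF that] unfolding submodule_def by (elim conjE)
  have p: "x \<oplus>\<^bsub>M\<^esub> y \<in> N" if "N \<in> F" "x \<in> N" "y \<in> N" for N x y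
    using s[OF that(1)] that(2,3) unfolding submodule_def by (elim conjE) blast
  have m: "a \<odot>\<^bsub>M\<^esub> x \<in> N" if "N \<in> F" "a \<in> carrier R" "x \<in> N" for N a x
    using s[OF that(1)] that(2,3) unfolding submodule_def by (elim conjE) blast
  obtain N0 where "N0 \<in> F" using assms(1) by blast
  then have "\<Inter>F \<subseteq> carrier M" using c by blast
  then show ?thesis unfolding submodule_def using z p m by blast
qed

lemma carrier_submodule:
  assumes "lmodule R M" shows "submodule R M (carrier M)"
proof -
  have ag: "abelian_group M" using lmodD(2)[OF assms] .
  show ?thesis unfolding submodule_def
    using ag_zero[OF ag] ag_add[OF ag] lmodD(3)[OF assms] by simp
qed

lemma artinian_min:
  assumes art: "artinian R M" and ne: "A \<noteq> {}" and sub: "\<forall>K\<in>A. submodule R M K"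
  shows "\<exists>K\<in>A. \<forall>K'\<in>A. K' \<subseteq> K \<longrightarrow> K' = K"
proof (rule ccontr)
  assume nm: "\<not> (\<exists>K\<in>A. \<forall>K'\<in>A. K' \<subseteq> K \<longrightarrow> K' = K)"
  have h1: "\<exists>K'\<in>A. K' \<subset> K" if "K \<in> A" for K
  proof -
    have "\<not> (\<forall>K'\<in>A. K' \<subseteq> K \<longrightarrow> K' = K)" using nm that by simp
    then obtain K' where "K' \<in> A" "K' \<subseteq> K" "K' \<noteq> K" by simp blast
    then show ?thesis by blast
  qed
  have h: "\<forall>K\<in>A. \<exists>K'\<in>A. K' \<subset> K" using h1 by simp
  define nxt where "nxt K = (SOME K'. K' \<in> A \<and> K' \<subset> K)" for K
  have nx: "nxt K \<in> A \<and> nxt K \<subset> K" if "K \<in> A" for K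
  proof -
    have "\<exists>K'. K' \<in> A \<and> K' \<subset> K" using h that by blast
    then show ?thesis unfolding nxt_def by (rule someI_ex)
  qed
  obtain K0 where K0: "K0 \<in> A" using ne by blast
  define C where "C n = (nxt ^^ n) K0" for n
  have C0: "C 0 = K0" by (simp add: C_def)
  have CS: "C (Suc n) = nxt (C n)" for n by (simp add: C_def)
  have CA: "C n \<in> A" for n
  proof (induction n)
    case 0 then show ?case using C0 K0 by simp
  next
    case (Suc n) then show ?case using CS nx by simp
  qed
  have Cs: "C (Suc n) \<subset> C n" for n using nx[OF CA[of n]] CS[of n] by simp
  have s1: "\<And>n. submodule R M (C n)" using CA sub by blast
  have s2: "\<And>n. C (Suc n) \<subseteq> C n" using Cs by blast
  have "\<exists>n. \<forall>m\<ge>n. C m = C n"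
    using art[unfolded artinian_def, rule_format, of C, OF s1 s2] .
  then obtain n where nn: "\<forall>m\<ge>n. C m = C n" by blast
  have "Suc n \<ge> n" by simp
  then have "C (Suc n) = C n" using nn by blast
  with Cs[of n] show False by simp
qed




definition sing_mod :: "('r, 'x) module \<Rightarrow> ('r, 'x set) module" where
  "sing_mod Z = \<lparr>carrier = (\<lambda>z. {z}) ` carrier Z,
     mult = (\<lambda>A B. {the_elem A \<otimes>\<^bsub>Z\<^esub> the_elem B}), one = {\<one>\<^bsub>Z\<^esub>},
     zero = {\<zero>\<^bsub>Z\<^esub>}, add = (\<lambda>A B. {the_elem A \<oplus>\<^bsub>Z\<^esub> the_elem B}),
     smult = (\<lambda>a A. {a \<odot>\<^bsub>Z\<^esub> the_elem A})\<rparr>"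

lemma sing_simps:
  "carrier (sing_mod Z) = (\<lambda>z. {z}) ` carrier Z"
  "\<zero>\<^bsub>sing_mod Z\<^esub> = {\<zero>\<^bsub>Z\<^esub>}"
  "A \<oplus>\<^bsub>sing_mod Z\<^esub> B = {the_elem A \<oplus>\<^bsub>Z\<^esub> the_elem B}"
  "a \<odot>\<^bsub>sing_mod Z\<^esub> A = {a \<odot>\<^bsub>Z\<^esub> the_elem A}"
  by (simp_all add: sing_mod_def)

lemma sing_lmodule:
  assumes Z: "lmodule R Z"
  shows "lmodule R (sing_mod Z)"
proof -
  interpret Zg: abelian_group Z using lmodD(2)[OF Z] .
  have ag: "abelian_group (sing_mod Z)"
  proof (rule abelian_groupI)
    fix x y assume "x \<in> carrier (sing_mod Z)" "y \<in> carrier (sing_mod Z)"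
    then show "x \<oplus>\<^bsub>sing_mod Z\<^esub> y \<in> carrier (sing_mod Z)" by (auto simp: sing_simps)
  next
    show "\<zero>\<^bsub>sing_mod Z\<^esub> \<in> carrier (sing_mod Z)" by (auto simp: sing_simps)
  next
    fix x y z assume "x \<in> carrier (sing_mod Z)" "y \<in> carrier (sing_mod Z)" "z \<in> carrier (sing_mod Z)"
    then show "x \<oplus>\<^bsub>sing_mod Z\<^esub> y \<oplus>\<^bsub>sing_mod Z\<^esub> z = x \<oplus>\<^bsub>sing_mod Z\<^esub> (y \<oplus>\<^bsub>sing_mod Z\<^esub> z)"
      by (auto simp: sing_simps Zg.a_assoc)
  next
    fix x y assume "x \<in> carrier (sing_mod Z)" "y \<in> carrier (sing_mod Z)"
    then show "x \<oplus>\<^bsub>sing_mod Z\<^esub> y = y \<oplus>\<^bsub>sing_mod Z\<^esub> x" by (auto simp: sing_simps Zg.a_comm)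
  next
    fix x assume "x \<in> carrier (sing_mod Z)"
    then show "\<zero>\<^bsub>sing_mod Z\<^esub> \<oplus>\<^bsub>sing_mod Z\<^esub> x = x" by (auto simp: sing_simps)
  next
    fix x assume "x \<in> carrier (sing_mod Z)"
    then obtain z where z: "z \<in> carrier Z" "x = {z}" by (auto simp: sing_simps)
    have "{\<ominus>\<^bsub>Z\<^esub> z} \<in> carrier (sing_mod Z)" using z by (auto simp: sing_simps)
    moreover have "{\<ominus>\<^bsub>Z\<^esub> z} \<oplus>\<^bsub>sing_mod Z\<^esub> x = \<zero>\<^bsub>sing_mod Z\<^esub>"
      using z by (simp add: sing_simps Zg.l_neg)
    ultimately show "\<exists>y\<in>carrier (sing_mod Z). y \<oplus>\<^bsub>sing_mod Z\<^esub> x = \<zero>\<^bsub>sing_mod Z\<^esub>" by blast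
  qed
  show ?thesis unfolding lmodule_def
    using lmodD(1)[OF Z] ag lmodD(3-7)[OF Z] by (auto simp: sing_simps)
qed

lemma sing_hom:
  assumes "lmodule R Z" shows "mod_hom R Z (sing_mod Z) (\<lambda>z. {z})"
  unfolding mod_hom_def by (auto simp: sing_simps)

lemma sing_inv_hom:
  assumes g: "mod_hom R M (sing_mod Z) g"
  shows "mod_hom R M Z (\<lambda>m. the_elem (g m))"
proof -
  have c: "\<And>x. x \<in> carrier M \<Longrightarrow> \<exists>z\<in>carrier Z. g x = {z}"
    using homD(1)[OF g] by (auto simp: sing_simps)
  show ?thesis unfolding mod_hom_def
  proof (intro conjI ballI)
    show "(\<lambda>m. the_elem (g m)) \<in> carrier M \<rightarrow> carrier Z" using c by fastforce
  next
    fix x y assume "x \<in> carrier M" "y \<in> carrier M"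
    then show "the_elem (g (x \<oplus>\<^bsub>M\<^esub> y)) = the_elem (g x) \<oplus>\<^bsub>Z\<^esub> the_elem (g y)"
      using homD(2)[OF g] by (simp add: sing_simps)
  next
    fix a x assume "a \<in> carrier R" "x \<in> carrier M"
    then show "the_elem (g (a \<odot>\<^bsub>M\<^esub> x)) = a \<odot>\<^bsub>Z\<^esub> the_elem (g x)"
      using homD(3)[OF g] by (simp add: sing_simps)
  qed
qed

lemma hom_comp:
  assumes "mod_hom R A B g" "mod_hom R B C f"
  shows "mod_hom R A C (f \<circ> g)"
  unfolding mod_hom_def using homD[OF assms(1)] homD[OF assms(2)] by (auto simp: Pi_def)

lemma prodM_zero:
  assumes M: "lmodule R M" and Z: "lmodule R Z" and N: "N \<subseteq> Ann R M Z"
  shows "prod_M R M N Z = {\<zero>\<^bsub>Z\<^esub>}"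
proof
  show "{\<zero>\<^bsub>Z\<^esub>} \<subseteq> prod_M R M N Z"
    unfolding prod_M_def using ag_zero[OF lmodD(2)[OF Z]] hom_zero[OF Z] by auto
next
  show "prod_M R M N Z \<subseteq> {\<zero>\<^bsub>Z\<^esub>}"
  proof
    fix x assume x: "x \<in> prod_M R M N Z"
    have kill: "\<forall>g. mod_hom R M (sing_mod Z) g \<longrightarrow> (\<forall>n\<in>N. g n = \<zero>\<^bsub>sing_mod Z\<^esub>)"
    proof (intro allI impI ballI)
      fix g n assume g: "mod_hom R M (sing_mod Z) g" and n: "n \<in> N"
      have nA: "n \<in> Ann R M Z" using n N by blast
      then have nM: "n \<in> carrier M" by (simp add: Ann_def)
      have "the_elem (g n) = \<zero>\<^bsub>Z\<^esub>" using nA sing_inv_hom[OF g] by (simp add: Ann_def)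
      moreover obtain z where "g n = {z}" using homD(1)[OF g nM] by (auto simp: sing_simps)
      ultimately show "g n = \<zero>\<^bsub>sing_mod Z\<^esub>" by (simp add: sing_simps)
    qed
    have "(\<lambda>z. {z}) x = \<zero>\<^bsub>sing_mod Z\<^esub>"
      using x sing_lmodule[OF Z] kill sing_hom[OF Z] unfolding prod_M_def by blast
    then show "x \<in> {\<zero>\<^bsub>Z\<^esub>}" by (simp add: sing_simps)
  qed
qed

lemma prodM_Ann:
  assumes X: "lmodule R X" and N: "N \<subseteq> carrier M" and p: "prod_M R M N X = {\<zero>\<^bsub>X\<^esub>}"
  shows "N \<subseteq> Ann R M X"
proof
  fix n assume n: "n \<in> N"
  have "\<forall>g. mod_hom R M X g \<longrightarrow> g n = \<zero>\<^bsub>X\<^esub>"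
  proof (intro allI impI)
    fix g assume g: "mod_hom R M X g"
    have "g n \<in> prod_M R M N X"
      unfolding prod_M_def
    proof (intro CollectI conjI allI impI)
      show "g n \<in> carrier X" using homD(1)[OF g] n N by blast
      fix W :: "('a, 'b set) module" and f
      assume h: "lmodule R W \<and> (\<forall>g. mod_hom R M W g \<longrightarrow> (\<forall>n\<in>N. g n = \<zero>\<^bsub>W\<^esub>)) \<and> mod_hom R X W f"
      then have "mod_hom R M W (f \<circ> g)" using hom_comp[OF g] by blast
      then show "f (g n) = \<zero>\<^bsub>W\<^esub>" using h n by fastforce
    qed
    then show "g n = \<zero>\<^bsub>X\<^esub>" using p by blast
  qed
  then show "n \<in> Ann R M X" using n N by (auto simp: Ann_def)
qed




lemma image_submodule:
  assumes M: "lmodule R M" and X: "lmodule R X" and f: "mod_hom R M X f" and K: "submodule R M K"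
  shows "submodule R X (f ` K)"
proof -
  have KM: "K \<subseteq> carrier M" using K by (simp add: submodule_def)
  have z: "\<zero>\<^bsub>M\<^esub> \<in> K" using K by (simp add: submodule_def)
  have p: "x \<oplus>\<^bsub>M\<^esub> y \<in> K" if "x \<in> K" "y \<in> K" for x y using K that by (simp add: submodule_def)
  have m: "a \<odot>\<^bsub>M\<^esub> x \<in> K" if "a \<in> carrier R" "x \<in> K" for a x using K that by (simp add: submodule_def)
  show ?thesis unfolding submodule_def
  proof (intro conjI ballI)
    show "f ` K \<subseteq> carrier X" using homD(1)[OF f] KM by blast
    show "\<zero>\<^bsub>X\<^esub> \<in> f ` K" using hom_zero[OF M X f] z by (metis imageI)
  next
    fix u v assume "u \<in> f ` K" "v \<in> f ` K"
    then obtain x y where xy: "x \<in> K" "y \<in> K" "u = f x" "v = f y" by blast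
    then have "u \<oplus>\<^bsub>X\<^esub> v = f (x \<oplus>\<^bsub>M\<^esub> y)" using homD(2)[OF f, of x y] KM xy by (simp add: subsetD)
    then show "u \<oplus>\<^bsub>X\<^esub> v \<in> f ` K" using p[OF xy(1,2)] by simp
  next
    fix a u assume a: "a \<in> carrier R" and "u \<in> f ` K"
    then obtain x where x: "x \<in> K" "u = f x" by blast
    then have "a \<odot>\<^bsub>X\<^esub> u = f (a \<odot>\<^bsub>M\<^esub> x)" using homD(3)[OF f, of a x] KM a x by (simp add: subsetD)
    then show "a \<odot>\<^bsub>X\<^esub> u \<in> f ` K" using m[OF a x(1)] by simp
  qed
qed

lemma submod_simps:
  "carrier (submod X Y) = Y" "\<zero>\<^bsub>submod X Y\<^esub> = \<zero>\<^bsub>X\<^esub>"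
  "a \<oplus>\<^bsub>submod X Y\<^esub> b = a \<oplus>\<^bsub>X\<^esub> b" "c \<odot>\<^bsub>submod X Y\<^esub> b = c \<odot>\<^bsub>X\<^esub> b"
  by (simp_all add: submod_def)

lemma submod_lmodule:
  assumes X: "lmodule R X" and Y: "submodule R X Y"
  shows "lmodule R (submod X Y)"
proof -
  interpret Xg: abelian_group X using lmodD(2)[OF X] .
  have r: "ring R" using lmodD(1)[OF X] .
  interpret Rr: ring R by fact
  have YX: "Y \<subseteq> carrier X" and z: "\<zero>\<^bsub>X\<^esub> \<in> Y" using Y by (simp_all add: submodule_def)
  have p: "x \<oplus>\<^bsub>X\<^esub> y \<in> Y" if "x \<in> Y" "y \<in> Y" for x y using Y that by (simp add: submodule_def)
  have m: "a \<odot>\<^bsub>X\<^esub> x \<in> Y" if "a \<in> carrier R" "x \<in> Y" for a x using Y that by (simp add: submodule_def)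
  have ag: "abelian_group (submod X Y)"
  proof (rule abelian_groupI)
    fix x y assume "x \<in> carrier (submod X Y)" "y \<in> carrier (submod X Y)"
    then show "x \<oplus>\<^bsub>submod X Y\<^esub> y \<in> carrier (submod X Y)" using p by (simp add: submod_simps)
  next
    show "\<zero>\<^bsub>submod X Y\<^esub> \<in> carrier (submod X Y)" using z by (simp add: submod_simps)
  next
    fix x y w assume "x \<in> carrier (submod X Y)" "y \<in> carrier (submod X Y)" "w \<in> carrier (submod X Y)"
    then show "x \<oplus>\<^bsub>submod X Y\<^esub> y \<oplus>\<^bsub>submod X Y\<^esub> w = x \<oplus>\<^bsub>submod X Y\<^esub> (y \<oplus>\<^bsub>submod X Y\<^esub> w)"
      using YX by (simp add: submod_simps Xg.a_assoc subsetD)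
  next
    fix x y assume "x \<in> carrier (submod X Y)" "y \<in> carrier (submod X Y)"
    then show "x \<oplus>\<^bsub>submod X Y\<^esub> y = y \<oplus>\<^bsub>submod X Y\<^esub> x"
      using YX by (simp add: submod_simps Xg.a_comm subsetD)
  next
    fix x assume "x \<in> carrier (submod X Y)"
    then show "\<zero>\<^bsub>submod X Y\<^esub> \<oplus>\<^bsub>submod X Y\<^esub> x = x" using YX by (auto simp: submod_simps)
  next
    fix x assume xY: "x \<in> carrier (submod X Y)"
    then have x: "x \<in> Y" "x \<in> carrier X" using YX by (auto simp: submod_simps)
    have n1: "\<ominus>\<^bsub>R\<^esub> \<one>\<^bsub>R\<^esub> \<in> carrier R" by simp
    have "(\<ominus>\<^bsub>R\<^esub> \<one>\<^bsub>R\<^esub>) \<odot>\<^bsub>X\<^esub> x \<oplus>\<^bsub>X\<^esub> x = (\<ominus>\<^bsub>R\<^esub> \<one>\<^bsub>R\<^esub>) \<odot>\<^bsub>X\<^esub> x \<oplus>\<^bsub>X\<^esub> \<one>\<^bsub>R\<^esub> \<odot>\<^bsub>X\<^esub> x"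
      using lmodD(7)[OF X x(2)] by simp
    also have "\<dots> = (\<ominus>\<^bsub>R\<^esub> \<one>\<^bsub>R\<^esub> \<oplus>\<^bsub>R\<^esub> \<one>\<^bsub>R\<^esub>) \<odot>\<^bsub>X\<^esub> x"
      using lmodD(4)[OF X n1 Rr.one_closed x(2)] by simp
    also have "\<dots> = \<zero>\<^bsub>R\<^esub> \<odot>\<^bsub>X\<^esub> x" by (simp add: Rr.l_neg)
    also have "\<dots> = \<zero>\<^bsub>X\<^esub>" using zero_smult[OF X x(2)] .
    finally have e: "(\<ominus>\<^bsub>R\<^esub> \<one>\<^bsub>R\<^esub>) \<odot>\<^bsub>X\<^esub> x \<oplus>\<^bsub>X\<^esub> x = \<zero>\<^bsub>X\<^esub>" .
    show "\<exists>y\<in>carrier (submod X Y). y \<oplus>\<^bsub>submod X Y\<^esub> x = \<zero>\<^bsub>submod X Y\<^esub>"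
      using m[OF n1 x(1)] e by (auto simp: submod_simps)
  qed
  show ?thesis unfolding lmodule_def
  proof (intro conjI ballI)
    show "ring R" by fact
    show "abelian_group (submod X Y)" by fact
  qed (use YX m lmodD(4-7)[OF X] in \<open>auto simp: submod_simps subsetD\<close>)
qed

lemma hom_from_submod:
  assumes "mod_hom R M (submod X Y) g" "Y \<subseteq> carrier X"
  shows "mod_hom R M X g"
  using assms unfolding mod_hom_def by (auto simp: submod_simps Pi_def)




lemma prime_primitive:
  fixes R :: "'r ring" and M :: "('r, 'a) module"
  assumes M: "lmodule R M" and art: "artinian R M" and pr: "prime_M_ideal R M P"
  shows "primitive_M_ideal R M P"
proof -
  obtain X :: "('r, 'r set) module" where Xp: "M_prime R M X" and PX: "P = Ann R M X"
    using pr unfolding prime_M_ideal_def by blast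
  have Mi: "M_ideal R M P" and Pne: "P \<noteq> carrier M" using pr unfolding prime_M_ideal_def by blast+
  have X: "lmodule R X" using Xp unfolding M_prime_def by blast
  have PM: "P \<subseteq> carrier M" using PX Ann_subset[of R M X] by simp
  define A where "A = {K. submodule R M K \<and> \<not> K \<subseteq> P}"
  have "carrier M \<in> A" using carrier_submodule[OF M] Pne PM unfolding A_def by blast
  then have "A \<noteq> {}" by blast
  have subA: "\<forall>K\<in>A. submodule R M K" unfolding A_def by blast
  then obtain K where KA: "K \<in> A" and Kmin: "\<forall>K'\<in>A. K' \<subseteq> K \<longrightarrow> K' = K"
    using artinian_min[OF art \<open>A \<noteq> {}\<close> subA] by blast
  have K: "submodule R M K" and KP: "\<not> K \<subseteq> P" using KA unfolding A_def by blast+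
  have KM: "K \<subseteq> carrier M" using K by (simp add: submodule_def)
  obtain k where k: "k \<in> K" "k \<notin> P" using KP by blast
  then obtain f where f: "mod_hom R M X f" and fk: "f k \<noteq> \<zero>\<^bsub>X\<^esub>"
    using KM PX unfolding Ann_def by blast
  define Y where "Y = f ` K"
  have Y: "submodule R X Y" unfolding Y_def using image_submodule[OF M X f K] .
  have YX: "Y \<subseteq> carrier X" using Y by (simp add: submodule_def)
  define S where "S = submod X Y"
  have S: "lmodule R S" unfolding S_def using submod_lmodule[OF X Y] .
  have fkY: "f k \<in> Y" unfolding Y_def using k by blast
  have Y0: "Y \<noteq> {\<zero>\<^bsub>X\<^esub>}" using fkY fk by blast
  have simple: "simple_mod R S"
    unfolding simple_mod_def
  proof (intro conjI allI impI)
    show "lmodule R S" by fact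
    show "carrier S \<noteq> {\<zero>\<^bsub>S\<^esub>}" using Y0 by (simp add: S_def submod_simps)
  next
    fix N' assume N': "submodule R S N'"
    have N'Y: "N' \<subseteq> Y" using N' by (simp add: submodule_def S_def submod_simps)
    have z': "\<zero>\<^bsub>X\<^esub> \<in> N'" using N' by (simp add: submodule_def S_def submod_simps)
    have p': "u \<oplus>\<^bsub>X\<^esub> v \<in> N'" if "u \<in> N'" "v \<in> N'" for u v
      using N' that by (simp add: submodule_def S_def submod_simps)
    have m': "a \<odot>\<^bsub>X\<^esub> u \<in> N'" if "a \<in> carrier R" "u \<in> N'" for a u
      using N' that by (simp add: submodule_def S_def submod_simps)
    define K' where "K' = {x \<in> K. f x \<in> N'}"
    have K'K: "K' \<subseteq> K" unfolding K'_def by blast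
    have K'sub: "submodule R M K'"
      unfolding submodule_def
    proof (intro conjI ballI)
      show "K' \<subseteq> carrier M" using K'K KM by blast
      show "\<zero>\<^bsub>M\<^esub> \<in> K'" unfolding K'_def using K hom_zero[OF M X f] z'
        by (simp add: submodule_def)
    next
      fix x y assume xy: "x \<in> K'" "y \<in> K'"
      then have "x \<in> K" "y \<in> K" "f x \<in> N'" "f y \<in> N'" unfolding K'_def by blast+
      moreover have "f (x \<oplus>\<^bsub>M\<^esub> y) = f x \<oplus>\<^bsub>X\<^esub> f y"
        using homD(2)[OF f, of x y] KM \<open>x \<in> K\<close> \<open>y \<in> K\<close> by (simp add: subsetD)
      ultimately show "x \<oplus>\<^bsub>M\<^esub> y \<in> K'" unfolding K'_def using K p'
        by (simp add: submodule_def)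
    next
      fix a x assume a: "a \<in> carrier R" and x: "x \<in> K'"
      then have "x \<in> K" "f x \<in> N'" unfolding K'_def by blast+
      moreover have "f (a \<odot>\<^bsub>M\<^esub> x) = a \<odot>\<^bsub>X\<^esub> f x"
        using homD(3)[OF f, of a x] KM \<open>x \<in> K\<close> a by (simp add: subsetD)
      ultimately show "a \<odot>\<^bsub>M\<^esub> x \<in> K'" unfolding K'_def using K m' a
        by (simp add: submodule_def)
    qed
    show "N' = {\<zero>\<^bsub>S\<^esub>} \<or> N' = carrier S"
    proof (cases "K' \<subseteq> P")
      case True
      have "N' \<subseteq> {\<zero>\<^bsub>X\<^esub>}"
      proof
        fix u assume u: "u \<in> N'"
        then obtain x where x: "x \<in> K" "u = f x" using N'Y unfolding Y_def by blast
        then have "x \<in> K'" using u unfolding K'_def by blast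
        then have "x \<in> Ann R M X" using True PX by blast
        then show "u \<in> {\<zero>\<^bsub>X\<^esub>}" using f x unfolding Ann_def by blast
      qed
      then have "N' = {\<zero>\<^bsub>X\<^esub>}" using z' by blast
      then show ?thesis by (simp add: S_def submod_simps)
    next
      case False
      then have "K' \<in> A" using K'sub unfolding A_def by blast
      then have "K' = K" using Kmin K'K by blast
      then have "Y \<subseteq> N'" unfolding Y_def K'_def by blast
      then show ?thesis using N'Y by (simp add: S_def submod_simps)
    qed
  qed
  have AS: "P = Ann R M S"
  proof
    show "P \<subseteq> Ann R M S"
    proof
      fix m assume m: "m \<in> P"
      then have mM: "m \<in> carrier M" using PM by blast
      have "g m = \<zero>\<^bsub>S\<^esub>" if g: "mod_hom R M S g" for g
      proof -
        have "mod_hom R M X g" using hom_from_submod[OF g[unfolded S_def] YX] .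
        then have "g m = \<zero>\<^bsub>X\<^esub>" using m PX unfolding Ann_def by blast
        then show ?thesis by (simp add: S_def submod_simps)
      qed
      then show "m \<in> Ann R M S" using mM unfolding Ann_def by blast
    qed
  next
    have Nsub: "submodule R M (Ann R M S)" using Ann_submodule[OF M S] .
    have "prod_M R M (Ann R M S) S = {\<zero>\<^bsub>S\<^esub>}" using prodM_zero[OF M S] by blast
    then have pz: "prod_M R M (Ann R M S) (submod X Y) = {\<zero>\<^bsub>X\<^esub>}" by (simp add: S_def submod_simps)
    have "prod_M R M (Ann R M S) X = {\<zero>\<^bsub>X\<^esub>} \<or> Y = {\<zero>\<^bsub>X\<^esub>}"
      using Xp Nsub Y pz unfolding M_prime_def by blast
    then have "prod_M R M (Ann R M S) X = {\<zero>\<^bsub>X\<^esub>}" using Y0 by blast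
    then have "Ann R M S \<subseteq> Ann R M X" using prodM_Ann[OF X Ann_subset] by blast
    then show "Ann R M S \<subseteq> P" using PX by simp
  qed
  show ?thesis unfolding primitive_M_ideal_def using Mi simple AS S_def by blast
qed




lemma prime_sub:
  fixes R :: "'r ring" and M :: "('r, 'a) module"
  assumes M: "lmodule R M" and pr: "prime_M_ideal R M P"
  shows "submodule R M P"
proof -
  obtain X :: "('r, 'r set) module" where Xp: "M_prime R M X" and PX: "P = Ann R M X"
    using pr unfolding prime_M_ideal_def by blast
  have X: "lmodule R X" using Xp unfolding M_prime_def by blast
  show ?thesis using Ann_submodule[OF M X] PX by simp
qed

theorem theorem5p7:
  fixes R :: "'r ring" and M :: "('r, 'a) module"
  assumes "lmodule R M"
    and "proj_in_sigma R M"
    and "artinian R M"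
  shows "prime_radical R M = carrier M \<or>
    (\<exists>Ps :: 'a set set. finite Ps \<and> Ps \<noteq> {} \<and> (\<forall>P\<in>Ps. primitive_M_ideal R M P) \<and>
       prime_radical R M = \<Inter>Ps)"
proof (cases "{P. prime_M_ideal R M P} = {}")
  case True
  then have "prime_radical R M = carrier M" unfolding prime_radical_def by (simp only: Inter_empty) simp
  then show ?thesis by blast
next
  case False
  define Pr where "Pr = {P. prime_M_ideal R M P}"
  have PrS: "\<forall>P\<in>Pr. submodule R M P" using prime_sub[OF assms(1)] unfolding Pr_def by blast
  have PrM: "P \<subseteq> carrier M" if "P \<in> Pr" for P using PrS that by (simp add: submodule_def)
  define B where "B = {\<Inter>F | F. finite F \<and> F \<noteq> {} \<and> F \<subseteq> Pr}"
  obtain P0 where P0: "P0 \<in> Pr" using False unfolding Pr_def by blast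
  have "\<Inter>{P0} \<in> B" unfolding B_def using P0 by blast
  then have Bne: "B \<noteq> {}" by blast
  have subB: "\<forall>K\<in>B. submodule R M K"
  proof
    fix K assume "K \<in> B"
    then obtain F where F: "K = \<Inter>F" "F \<noteq> {}" "F \<subseteq> Pr" unfolding B_def by blast
    then show "submodule R M K" using Inter_submodule[of F R M] PrS by blast
  qed
  obtain J where JB: "J \<in> B" and Jmin: "\<forall>K'\<in>B. K' \<subseteq> J \<longrightarrow> K' = J"
    using artinian_min[OF assms(3) Bne subB] by blast
  obtain F0 where F0: "J = \<Inter>F0" "finite F0" "F0 \<noteq> {}" "F0 \<subseteq> Pr" using JB unfolding B_def by blast
  have JP: "J \<subseteq> P" if P: "P \<in> Pr" for P
  proof -
    have "\<Inter>(insert P F0) \<in> B" unfolding B_def using F0 P by blast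
    moreover have "\<Inter>(insert P F0) \<subseteq> J" using F0 by blast
    ultimately have "\<Inter>(insert P F0) = J" using Jmin by blast
    then show ?thesis by blast
  qed
  have "prime_radical R M = J"
  proof
    show "prime_radical R M \<subseteq> J" unfolding prime_radical_def using F0 unfolding Pr_def by blast
  next
    obtain Q where "Q \<in> F0" using F0 by blast
    then have "J \<subseteq> carrier M" using F0 PrM by blast
    then show "J \<subseteq> prime_radical R M" unfolding prime_radical_def using JP unfolding Pr_def by blast
  qed
  moreover have "\<forall>P\<in>F0. primitive_M_ideal R M P"
    using F0(4) prime_primitive[OF assms(1) assms(3)] unfolding Pr_def by blast
  ultimately show ?thesis using F0 by blast
qed


end
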